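(* Let $\mathbf x,\mathbf y$ be the Heegaard states corresponding to lifted partial permutations $(\tilde S,\tilde f)$ and $(\tilde T,\tilde g)$. There exists a compactly supported $\phi\in D(\mathbf x,\mathbf y)$ if and only if $\tilde S=\tilde T$ and $\tilde f(\tilde S)=\tilde g(\tilde T)$. Moreover, if such $\phi$ exists, it is unique.
   Context: Fix integers $0<k<m$. $G_m$ is the group of isometries of $\mathbb R$ generated by $x\mapsto 1-x$ and $x\mapsto 2m-1-x$; $Q_1:\mathbb Z\to\mathbb Z/G_m\cong\{1,\dots,m-1\}$. A lifted partial permutation on $k$ letters is a pair $(\tilde S,\tilde f)$ with $\tilde S\subset\mathbb Z$ $G_m$-invariant, $|\tilde S/G_m|=k$, $\tilde f:\tilde S\to\mathbb Z$ $G_m$-equivariant with injective induced map $\tilde S/G_m\to\mathbb Z/G_m$. In $\mathbb R^2$ take vertical lines $\tilde\alpha_i=\{i\}\times\mathbb R$, horizontal lines $\tilde\beta_i=\mathbb R\times\{i\}$; $\mathbb G_m$ is generated by the $180^\circ$ rotations about $(\frac12,\frac12)$ and $(m-\frac12,m-\frac12)$; $\mathcal H=\mathbb R^2/\mathbb G_m$, with $\alpha_i,\beta_i$ ($1\le i\le m-1$) the images of $\tilde\alpha_j,\tilde\beta_j$ with $Q_1(j)=i$. A $k$-fold Heegaard state is a set of $k$ points each on some $\alpha_i\cap\beta_j$ with distinct $\alpha$'s and distinct $\beta$'s; $(\tilde S,\tilde f)$ corresponds to the image of its graph $\{(i,\tilde f(i))\}$. A two-chain is an assignment of integers to components of $\mathcal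 H\setminus(\boldsymbol\alpha\cup\boldsymbol\beta)$. At an intersection point of $\alpha_i$ and $\beta_j$ with local multiplicities $A,B,C,D$ in the four quadrants (with $A,D$ opposite and $B,C$ opposite, oriented as in the standard convention), the point is an initial corner if $B+C=A+D+1$, a terminal corner if $B+C=A+D-1$, and not a corner if $A+D=B+C$. $D(\mathbf x,\mathbf y)$ is the set of two-chains whose initial corners are exactly the points of $\mathbf x\setminus\mathbf y$ and terminal corners exactly the points of $\mathbf y\setminus\mathbf x$ (with no other corners). *)

theory Defs
  imports Main Complex_Main
begin

definition refl1 :: "int \<Rightarrow> int" where "refl1 x = 1 - x"
definition refl2 :: "nat \<Rightarrow> int \<Rightarrow> int" where "refl2 m x = 2 * int m - 1 - x"

text \<open>G_m = group generated by the two reflections (both are involutions, so the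
  monoid generated under composition is the group).\<close>
inductive_set Gm :: "nat \<Rightarrow> (int \<Rightarrow> int) set" for m where
  Gm_id: "id \<in> Gm m"
| Gm_r1: "g \<in> Gm m \<Longrightarrow> refl1 \<circ> g \<in> Gm m"
| Gm_r2: "g \<in> Gm m \<Longrightarrow> refl2 m \<circ> g \<in> Gm m"

definition orbitZ :: "nat \<Rightarrow> int \<Rightarrow> int set" where
  "orbitZ m i = {g i | g. g \<in> Gm m}"

text \<open>Lifted partial permutation on k letters. The map f is only relevant on S.\<close>
definition lifted_pp :: "nat \<Rightarrow> nat \<Rightarrow> int set \<Rightarrow> (int \<Rightarrow> int) \<Rightarrow> bool" where
  "lifted_pp m k S f \<longleftrightarrow>
     (\<forall>g\<in>Gm m. \<forall>s\<in>S. g s \<in> S) \<and>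
     card (orbitZ m ` S) = k \<and> finite (orbitZ m ` S) \<and>
     (\<forall>g\<in>Gm m. \<forall>s\<in>S. f (g s) = g (f s)) \<and>
     (\<forall>s\<in>S. \<forall>t\<in>S. orbitZ m (f s) = orbitZ m (f t) \<longrightarrow> orbitZ m s = orbitZ m t)"

definition rot1 :: "real \<times> real \<Rightarrow> real \<times> real" where
  "rot1 p = (1 - fst p, 1 - snd p)"
definition rot2 :: "nat \<Rightarrow> real \<times> real \<Rightarrow> real \<times> real" where
  "rot2 m p = (2 * real m - 1 - fst p, 2 * real m - 1 - snd p)"

inductive_set PG :: "nat \<Rightarrow> (real \<times> real \<Rightarrow> real \<times> real) set" for m where
  PG_id: "id \<in> PG m"
| PG_r1: "g \<in> PG m \<Longrightarrow> rot1 \<circ> g \<in> PG m"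
| PG_r2: "g \<in> PG m \<Longrightarrow> rot2 m \<circ> g \<in> PG m"

text \<open>Points of H are PG-orbits of points of R^2.\<close>
definition orbitP :: "nat \<Rightarrow> real \<times> real \<Rightarrow> (real \<times> real) set" where
  "orbitP m p = {g p | g. g \<in> PG m}"

definition lattice :: "int \<Rightarrow> int \<Rightarrow> real \<times> real" where
  "lattice a b = (real_of_int a, real_of_int b)"

text \<open>Open unit square with lower-left corner (i,j); the components of
  R^2 minus the lines are exactly these squares.\<close>
definition Sq :: "int \<Rightarrow> int \<Rightarrow> (real \<times> real) set" where
  "Sq i j = {p. real_of_int i < fst p \<and> fst p < real_of_int i + 1 \<and>
                real_of_int j < snd p \<and> snd p < real_of_int j + 1}"

text \<open>Component of H minus (alpha \<union> beta), represented by its preimage in R^2.\<close>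
definition region :: "nat \<Rightarrow> int \<Rightarrow> int \<Rightarrow> (real \<times> real) set" where
  "region m i j = (\<Union>g\<in>PG m. g ` Sq i j)"

definition regions :: "nat \<Rightarrow> (real \<times> real) set set" where
  "regions m = {region m i j | i j. True}"

definition two_chain :: "nat \<Rightarrow> ((real \<times> real) set \<Rightarrow> int) \<Rightarrow> bool" where
  "two_chain m \<phi> \<longleftrightarrow> (\<forall>R. R \<notin> regions m \<longrightarrow> \<phi> R = 0)"

definition compact_supp :: "nat \<Rightarrow> ((real \<times> real) set \<Rightarrow> int) \<Rightarrow> bool" where
  "compact_supp m \<phi> \<longleftrightarrow> finite {R \<in> regions m. \<phi> R \<noteq> 0}"

definition hstate :: "nat \<Rightarrow> int set \<Rightarrow> (int \<Rightarrow> int) \<Rightarrow> (real \<times> real) set set" where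
  "hstate m S f = {orbitP m (lattice i (f i)) | i. i \<in> S}"

text \<open>Local multiplicities at the lattice point (a,b): A = NE, D = SW (opposite),
  B = NW, C = SE (opposite).\<close>
definition multA :: "nat \<Rightarrow> ((real \<times> real) set \<Rightarrow> int) \<Rightarrow> int \<Rightarrow> int \<Rightarrow> int" where
  "multA m \<phi> a b = \<phi> (region m a b)"
definition multB :: "nat \<Rightarrow> ((real \<times> real) set \<Rightarrow> int) \<Rightarrow> int \<Rightarrow> int \<Rightarrow> int" where
  "multB m \<phi> a b = \<phi> (region m (a - 1) b)"
definition multC :: "nat \<Rightarrow> ((real \<times> real) set \<Rightarrow> int) \<Rightarrow> int \<Rightarrow> int \<Rightarrow> int" where
  "multC m \<phi> a b = \<phi> (region m a (b - 1))"
definition multD :: "nat \<Rightarrow> ((real \<times> real) set \<Rightarrow> int) \<Rightarrow> int \<Rightarrow> int \<Rightarrow> int" where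
  "multD m \<phi> a b = \<phi> (region m (a - 1) (b - 1))"

definition initial_corner where
  "initial_corner m \<phi> a b \<longleftrightarrow>
     multB m \<phi> a b + multC m \<phi> a b = multA m \<phi> a b + multD m \<phi> a b + 1"
definition terminal_corner where
  "terminal_corner m \<phi> a b \<longleftrightarrow>
     multB m \<phi> a b + multC m \<phi> a b = multA m \<phi> a b + multD m \<phi> a b - 1"
definition no_corner where
  "no_corner m \<phi> a b \<longleftrightarrow>
     multB m \<phi> a b + multC m \<phi> a b = multA m \<phi> a b + multD m \<phi> a b"

text \<open>D(x,y). Every alpha/beta intersection point of H is the image of a lattice point.\<close>
definition Dom :: "nat \<Rightarrow> (real \<times> real) set set \<Rightarrow> (real \<times> real) set set
                   \<Rightarrow> ((real \<times> real) set \<Rightarrow> int) set" where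
  "Dom m x y = {\<phi>. two_chain m \<phi> \<and>
     (\<forall>a b. let P = orbitP m (lattice a b) in
        (P \<in> x - y \<longrightarrow> initial_corner m \<phi> a b) \<and>
        (P \<in> y - x \<longrightarrow> terminal_corner m \<phi> a b) \<and>
        (P \<notin> x - y \<and> P \<notin> y - x \<longrightarrow> no_corner m \<phi> a b))}"

end

theory Submission imports Defs begin

definition Tm :: "nat \<Rightarrow> int" where "Tm m = 2 * int m - 2"
definition tr :: "nat \<Rightarrow> int \<Rightarrow> int \<Rightarrow> int" where "tr m t x = x + t * Tm m"
definition rf :: "nat \<Rightarrow> int \<Rightarrow> int \<Rightarrow> int" where "rf m t x = 1 + t * Tm m - x"

lemma Gm_form: "g \<in> Gm m \<Longrightarrow> (\<exists>t. g = tr m t) \<or> (\<exists>t. g = rf m t)"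
proof (induction rule: Gm.induct)
  case Gm_id
  then show ?case by (rule disjI1, rule exI[of _ 0], auto simp: tr_def fun_eq_iff)
next
  case (Gm_r1 g)
  from Gm_r1.IH show ?case
  proof
    assume "\<exists>t. g = tr m t" then obtain t where "g = tr m t" by blast
    then have "refl1 \<circ> g = rf m (-t)" by (auto simp: fun_eq_iff tr_def rf_def refl1_def)
    then show ?case by blast
  next
    assume "\<exists>t. g = rf m t" then obtain t where "g = rf m t" by blast
    then have "refl1 \<circ> g = tr m (-t)" by (auto simp: fun_eq_iff tr_def rf_def refl1_def)
    then show ?case by blast
  qed
next
  case (Gm_r2 g)
  from Gm_r2.IH show ?case
  proof
    assume "\<exists>t. g = tr m t" then obtain t where "g = tr m t" by blast
    then have "refl2 m \<circ> g = rf m (1-t)" by (auto simp: fun_eq_iff tr_def rf_def refl2_def Tm_def algebra_simps)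
    then show ?case by blast
  next
    assume "\<exists>t. g = rf m t" then obtain t where "g = rf m t" by blast
    then have "refl2 m \<circ> g = tr m (1-t)" by (auto simp: fun_eq_iff tr_def rf_def refl2_def Tm_def algebra_simps)
    then show ?case by blast
  qed
qed

lemma tr_in_Gm: "tr m t \<in> Gm m"
proof -
  have A: "tr m t \<in> Gm m \<Longrightarrow> rf m (-t) \<in> Gm m" for t
  proof -
    assume "tr m t \<in> Gm m"
    from Gm_r1[OF this] have "refl1 \<circ> tr m t \<in> Gm m" .
    moreover have "refl1 \<circ> tr m t = rf m (-t)" by (auto simp: fun_eq_iff tr_def rf_def refl1_def)
    ultimately show ?thesis by simp
  qed
  have B: "tr m t \<in> Gm m \<Longrightarrow> rf m (1-t) \<in> Gm m" for t
  proof -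
    assume "tr m t \<in> Gm m"
    from Gm_r2[OF this] have "refl2 m \<circ> tr m t \<in> Gm m" .
    moreover have "refl2 m \<circ> tr m t = rf m (1-t)" by (auto simp: fun_eq_iff tr_def rf_def refl2_def Tm_def algebra_simps)
    ultimately show ?thesis by simp
  qed
  have C: "rf m s \<in> Gm m \<Longrightarrow> tr m (-s) \<in> Gm m" for s
  proof -
    assume "rf m s \<in> Gm m"
    from Gm_r1[OF this] have "refl1 \<circ> rf m s \<in> Gm m" .
    moreover have "refl1 \<circ> rf m s = tr m (-s)" by (auto simp: fun_eq_iff tr_def rf_def refl1_def)
    ultimately show ?thesis by simp
  qed
  have D: "rf m s \<in> Gm m \<Longrightarrow> tr m (1-s) \<in> Gm m" for s
  proof -
    assume "rf m s \<in> Gm m"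
    from Gm_r2[OF this] have "refl2 m \<circ> rf m s \<in> Gm m" .
    moreover have "refl2 m \<circ> rf m s = tr m (1-s)" by (auto simp: fun_eq_iff tr_def rf_def refl2_def Tm_def algebra_simps)
    ultimately show ?thesis by simp
  qed
  have 0: "tr m 0 \<in> Gm m"
  proof -
    have "tr m 0 = id" by (auto simp: fun_eq_iff tr_def)
    then show ?thesis using Gm_id by simp
  qed
  show ?thesis
  proof (induction t rule: int_induct[where k=0])
    case base then show ?case using 0 by simp
  next
    case (step1 i) then show ?case using D[OF A[OF step1(2)]] by (simp add: add.commute)
  next
    case (step2 i) then show ?case using C[OF B[OF step2(2)]] by simp
  qed
qed

lemma rf_in_Gm: "rf m t \<in> Gm m"
proof -
  have "refl1 \<circ> tr m (-t) = rf m t" by (auto simp: fun_eq_iff tr_def rf_def refl1_def)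
  then show ?thesis using Gm_r1[OF tr_in_Gm[of m "-t"]] by simp
qed

definition ptr :: "nat \<Rightarrow> int \<Rightarrow> real \<times> real \<Rightarrow> real \<times> real" where
  "ptr m t p = (fst p + of_int (t * Tm m), snd p + of_int (t * Tm m))"
definition prfl :: "nat \<Rightarrow> int \<Rightarrow> real \<times> real \<Rightarrow> real \<times> real" where
  "prfl m t p = (1 + of_int (t * Tm m) - fst p, 1 + of_int (t * Tm m) - snd p)"

lemma PG_form: "g \<in> PG m \<Longrightarrow> (\<exists>t. g = ptr m t) \<or> (\<exists>t. g = prfl m t)"
proof (induction rule: PG.induct)
  case PG_id
  then show ?case by (rule disjI1, rule exI[of _ 0], auto simp: ptr_def fun_eq_iff)
next
  case (PG_r1 g)
  from PG_r1.IH show ?case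
  proof
    assume "\<exists>t. g = ptr m t" then obtain t where "g = ptr m t" by blast
    then have "rot1 \<circ> g = prfl m (-t)" by (auto simp: fun_eq_iff ptr_def prfl_def rot1_def)
    then show ?case by blast
  next
    assume "\<exists>t. g = prfl m t" then obtain t where "g = prfl m t" by blast
    then have "rot1 \<circ> g = ptr m (-t)" by (auto simp: fun_eq_iff ptr_def prfl_def rot1_def)
    then show ?case by blast
  qed
next
  case (PG_r2 g)
  from PG_r2.IH show ?case
  proof
    assume "\<exists>t. g = ptr m t" then obtain t where "g = ptr m t" by blast
    then have "rot2 m \<circ> g = prfl m (1-t)" by (auto simp: fun_eq_iff ptr_def prfl_def rot2_def Tm_def algebra_simps)
    then show ?case by blast
  next
    assume "\<exists>t. g = prfl m t" then obtain t where "g = prfl m t" by blast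
    then have "rot2 m \<circ> g = ptr m (1-t)" by (auto simp: fun_eq_iff ptr_def prfl_def rot2_def Tm_def algebra_simps)
    then show ?case by blast
  qed
qed

lemma ptr_in_PG: "ptr m t \<in> PG m"
proof -
  have A: "ptr m t \<in> PG m \<Longrightarrow> prfl m (-t) \<in> PG m" for t
  proof -
    assume "ptr m t \<in> PG m"
    from PG_r1[OF this] have "rot1 \<circ> ptr m t \<in> PG m" .
    moreover have "rot1 \<circ> ptr m t = prfl m (-t)" by (auto simp: fun_eq_iff ptr_def prfl_def rot1_def)
    ultimately show ?thesis by simp
  qed
  have B: "ptr m t \<in> PG m \<Longrightarrow> prfl m (1-t) \<in> PG m" for t
  proof -
    assume "ptr m t \<in> PG m"
    from PG_r2[OF this] have "rot2 m \<circ> ptr m t \<in> PG m" .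
    moreover have "rot2 m \<circ> ptr m t = prfl m (1-t)" by (auto simp: fun_eq_iff ptr_def prfl_def rot2_def Tm_def algebra_simps)
    ultimately show ?thesis by simp
  qed
  have C: "prfl m s \<in> PG m \<Longrightarrow> ptr m (-s) \<in> PG m" for s
  proof -
    assume "prfl m s \<in> PG m"
    from PG_r1[OF this] have "rot1 \<circ> prfl m s \<in> PG m" .
    moreover have "rot1 \<circ> prfl m s = ptr m (-s)" by (auto simp: fun_eq_iff ptr_def prfl_def rot1_def)
    ultimately show ?thesis by simp
  qed
  have D: "prfl m s \<in> PG m \<Longrightarrow> ptr m (1-s) \<in> PG m" for s
  proof -
    assume "prfl m s \<in> PG m"
    from PG_r2[OF this] have "rot2 m \<circ> prfl m s \<in> PG m" .
    moreover have "rot2 m \<circ> prfl m s = ptr m (1-s)" by (auto simp: fun_eq_iff ptr_def prfl_def rot2_def Tm_def algebra_simps)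
    ultimately show ?thesis by simp
  qed
  have 0: "ptr m 0 \<in> PG m"
  proof -
    have "ptr m 0 = id" by (auto simp: fun_eq_iff ptr_def)
    then show ?thesis using PG_id by simp
  qed
  show ?thesis
  proof (induction t rule: int_induct[where k=0])
    case base then show ?case using 0 by simp
  next
    case (step1 i) then show ?case using D[OF A[OF step1(2)]] by (simp add: add.commute)
  next
    case (step2 i) then show ?case using C[OF B[OF step2(2)]] by simp
  qed
qed

lemma prfl_in_PG: "prfl m t \<in> PG m"
proof -
  have "rot1 \<circ> ptr m (-t) = prfl m t" by (auto simp: fun_eq_iff ptr_def prfl_def rot1_def)
  then show ?thesis using PG_r1[OF ptr_in_PG[of m "-t"]] by simp
qed

lemma Sq_mem_int: "(of_int a + 1/2, of_int b + 1/2) \<in> Sq i j \<longleftrightarrow> a = i \<and> b = j"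
proof -
  have "of_int i < (of_int a + 1/2::real) \<and> (of_int a + 1/2::real) < of_int i + 1 \<longleftrightarrow> a = i" for a i :: int
  proof
    assume h: "of_int i < (of_int a + 1/2::real) \<and> (of_int a + 1/2::real) < of_int i + 1"
    then have "i < a + 1" "a < i + 1" by linarith+
    then show "a = i" by simp
  qed auto
  then show ?thesis by (auto simp: Sq_def)
qed

lemma ptr_Sq: "ptr m t ` Sq i j = Sq (i + t * Tm m) (j + t * Tm m)"
proof
  show "ptr m t ` Sq i j \<subseteq> Sq (i + t * Tm m) (j + t * Tm m)"
    by (auto simp: ptr_def Sq_def)
  show "Sq (i + t * Tm m) (j + t * Tm m) \<subseteq> ptr m t ` Sq i j"
  proof
    fix p assume p: "p \<in> Sq (i + t * Tm m) (j + t * Tm m)"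
    let ?q = "(fst p - of_int (t * Tm m), snd p - of_int (t * Tm m))"
    have "?q \<in> Sq i j" using p by (auto simp: Sq_def)
    moreover have "p = ptr m t ?q" by (auto simp: ptr_def)
    ultimately show "p \<in> ptr m t ` Sq i j" by blast
  qed
qed

lemma prfl_Sq: "prfl m t ` Sq i j = Sq (t * Tm m - i) (t * Tm m - j)"
proof
  show "prfl m t ` Sq i j \<subseteq> Sq (t * Tm m - i) (t * Tm m - j)"
    by (auto simp: prfl_def Sq_def)
  show "Sq (t * Tm m - i) (t * Tm m - j) \<subseteq> prfl m t ` Sq i j"
  proof
    fix p assume p: "p \<in> Sq (t * Tm m - i) (t * Tm m - j)"
    let ?q = "(1 + of_int (t * Tm m) - fst p, 1 + of_int (t * Tm m) - snd p)"
    have "?q \<in> Sq i j" using p by (auto simp: Sq_def)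
    moreover have "p = prfl m t ?q" by (auto simp: prfl_def)
    ultimately show "p \<in> prfl m t ` Sq i j" by blast
  qed
qed

definition sqrel :: "nat \<Rightarrow> int \<Rightarrow> int \<Rightarrow> int \<Rightarrow> int \<Rightarrow> bool" where
  "sqrel m i j i' j' \<longleftrightarrow> (\<exists>t. i' = i + t * Tm m \<and> j' = j + t * Tm m) \<or>
                          (\<exists>t. i' = t * Tm m - i \<and> j' = t * Tm m - j)"

lemma region_char: "region m i j = {p. \<exists>i' j'. sqrel m i j i' j' \<and> p \<in> Sq i' j'}"
proof
  show "region m i j \<subseteq> {p. \<exists>i' j'. sqrel m i j i' j' \<and> p \<in> Sq i' j'}"
  proof
    fix p assume "p \<in> region m i j"
    then obtain g where g: "g \<in> PG m" "p \<in> g ` Sq i j" by (auto simp: region_def)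
    from PG_form[OF g(1)] show "p \<in> {p. \<exists>i' j'. sqrel m i j i' j' \<and> p \<in> Sq i' j'}"
    proof
      assume "\<exists>t. g = ptr m t"
      then obtain t where "g = ptr m t" by blast
      with g(2) have "p \<in> Sq (i + t * Tm m) (j + t * Tm m)" by (simp add: ptr_Sq)
      then show ?thesis unfolding sqrel_def by blast
    next
      assume "\<exists>t. g = prfl m t"
      then obtain t where "g = prfl m t" by blast
      with g(2) have "p \<in> Sq (t * Tm m - i) (t * Tm m - j)" by (simp add: prfl_Sq)
      then show ?thesis unfolding sqrel_def by blast
    qed
  qed
  show "{p. \<exists>i' j'. sqrel m i j i' j' \<and> p \<in> Sq i' j'} \<subseteq> region m i j"
  proof
    fix p assume "p \<in> {p. \<exists>i' j'. sqrel m i j i' j' \<and> p \<in> Sq i' j'}"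
    then obtain i' j' where h: "sqrel m i j i' j'" "p \<in> Sq i' j'" by blast
    from h(1) show "p \<in> region m i j" unfolding sqrel_def
    proof
      assume "\<exists>t. i' = i + t * Tm m \<and> j' = j + t * Tm m"
      then obtain t where "i' = i + t * Tm m \<and> j' = j + t * Tm m" by blast
      then have "p \<in> ptr m t ` Sq i j" using h(2) by (simp add: ptr_Sq)
      then show ?thesis using ptr_in_PG unfolding region_def by blast
    next
      assume "\<exists>t. i' = t * Tm m - i \<and> j' = t * Tm m - j"
      then obtain t where "i' = t * Tm m - i \<and> j' = t * Tm m - j" by blast
      then have "p \<in> prfl m t ` Sq i j" using h(2) by (simp add: prfl_Sq)
      then show ?thesis using prfl_in_PG unfolding region_def by blast
    qed
  qed
qed

lemma sqrel_refl: "sqrel m i j i j"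
  unfolding sqrel_def by (rule disjI1, rule exI[of _ 0], simp)

lemma sqrel_trans_eq: "sqrel m i j i' j' \<Longrightarrow> sqrel m i' j' a b \<longleftrightarrow> sqrel m i j a b"
  unfolding sqrel_def
  apply (elim disjE exE)
  subgoal for t
    apply (rule iffI)
     apply (elim disjE exE)
    subgoal for s by (rule disjI1, rule exI[of _ "t+s"], simp add: algebra_simps)
    subgoal for s by (rule disjI2, rule exI[of _ "s-t"], simp add: algebra_simps)
    apply (elim disjE exE)
    subgoal for s by (rule disjI1, rule exI[of _ "s-t"], simp add: algebra_simps)
    subgoal for s by (rule disjI2, rule exI[of _ "s+t"], simp add: algebra_simps)
    done
  subgoal for t
    apply (rule iffI)
     apply (elim disjE exE)
    subgoal for s by (rule disjI2, rule exI[of _ "t+s"], simp add: algebra_simps)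
    subgoal for s by (rule disjI1, rule exI[of _ "s-t"], simp add: algebra_simps)
    apply (elim disjE exE)
    subgoal for s by (rule disjI2, rule exI[of _ "t+s"], simp add: algebra_simps)
    subgoal for s by (rule disjI1, rule exI[of _ "s-t"], simp add: algebra_simps)
    done
  done

lemma region_eq_iff: "region m i j = region m i' j' \<longleftrightarrow> sqrel m i j i' j'"
proof
  assume e: "region m i j = region m i' j'"
  have "(of_int i' + 1/2, of_int j' + 1/2) \<in> region m i' j'"
    unfolding region_char using sqrel_refl Sq_mem_int by blast
  then have "(of_int i' + 1/2, of_int j' + 1/2) \<in> region m i j" using e by simp
  then obtain a b where "sqrel m i j a b" "(of_int i' + 1/2, of_int j' + 1/2) \<in> Sq a b"
    unfolding region_char by blast
  then show "sqrel m i j i' j'" using Sq_mem_int[of i' j' a b] by simp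
next
  assume "sqrel m i j i' j'"
  then show "region m i j = region m i' j'"
    unfolding region_char using sqrel_trans_eq by blast
qed

lemma lpS: "lifted_pp m k S f \<Longrightarrow> h \<in> Gm m \<Longrightarrow> s \<in> S \<Longrightarrow> h s \<in> S"
  unfolding lifted_pp_def by blast
lemma lpf: "lifted_pp m k S f \<Longrightarrow> h \<in> Gm m \<Longrightarrow> s \<in> S \<Longrightarrow> f (h s) = h (f s)"
  unfolding lifted_pp_def by blast

lemma orbitP_self: "p \<in> orbitP m p"
  unfolding orbitP_def by (rule CollectI, rule exI[of _ id], simp add: PG_id)

lemma hstate_mem:
  assumes lp: "lifted_pp m k S f"
  shows "orbitP m (lattice a b) \<in> hstate m S f \<longleftrightarrow> a \<in> S \<and> b = f a"
proof
  assume "orbitP m (lattice a b) \<in> hstate m S f"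
  then obtain i where i: "i \<in> S" "orbitP m (lattice a b) = orbitP m (lattice i (f i))"
    unfolding hstate_def by blast
  have "lattice a b \<in> orbitP m (lattice i (f i))" using i(2) orbitP_self by metis
  then obtain g where g: "g \<in> PG m" "lattice a b = g (lattice i (f i))"
    unfolding orbitP_def by blast
  from PG_form[OF g(1)] show "a \<in> S \<and> b = f a"
  proof
    assume "\<exists>t. g = ptr m t"
    then obtain t where "g = ptr m t" by blast
    with g(2) have "real_of_int a = real_of_int (i + t * Tm m)" "real_of_int b = real_of_int (f i + t * Tm m)"
      by (auto simp: ptr_def lattice_def)
    then have ab: "a = tr m t i" "b = tr m t (f i)" unfolding tr_def using of_int_eq_iff by blast+
    show ?thesis using ab lpS[OF lp tr_in_Gm i(1)] lpf[OF lp tr_in_Gm i(1)] by simp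
  next
    assume "\<exists>t. g = prfl m t"
    then obtain t where "g = prfl m t" by blast
    with g(2) have "real_of_int a = real_of_int (1 + t * Tm m - i)" "real_of_int b = real_of_int (1 + t * Tm m - f i)"
      by (auto simp: prfl_def lattice_def)
    then have ab: "a = rf m t i" "b = rf m t (f i)" unfolding rf_def using of_int_eq_iff by blast+
    show ?thesis using ab lpS[OF lp rf_in_Gm i(1)] lpf[OF lp rf_in_Gm i(1)] by simp
  qed
next
  assume "a \<in> S \<and> b = f a"
  then show "orbitP m (lattice a b) \<in> hstate m S f" unfolding hstate_def by blast
qed

lemma lp_inj:
  assumes lp: "lifted_pp m k S f" and m: "2 \<le> m"
  shows "inj_on f S"
proof
  fix s t assume st: "s \<in> S" "t \<in> S" "f s = f t"
  then have "orbitZ m s = orbitZ m t" using lp unfolding lifted_pp_def by metis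
  moreover have "t \<in> orbitZ m t" unfolding orbitZ_def by (rule CollectI, rule exI[of _ id], simp add: Gm_id)
  ultimately obtain h where h: "h \<in> Gm m" "t = h s" unfolding orbitZ_def by auto
  have T: "Tm m = 2 * (int m - 1)" "int m - 1 > 0" using m by (auto simp: Tm_def)
  from Gm_form[OF h(1)] show "s = t"
  proof
    assume "\<exists>u. h = tr m u"
    then obtain u where u: "h = tr m u" by blast
    have "f t = tr m u (f s)" using lpf[OF lp h(1) st(1)] h u by simp
    then have "u * Tm m = 0" using st(3) by (simp add: tr_def)
    then have "u = 0" using T by simp
    then show ?thesis using h u by (simp add: tr_def)
  next
    assume "\<exists>u. h = rf m u"
    then obtain u where u: "h = rf m u" by blast
    have "f t = rf m u (f s)" using lpf[OF lp h(1) st(1)] h u by simp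
    then have "2 * f s = 1 + 2 * (u * (int m - 1))" using st(3) T by (simp add: rf_def algebra_simps)
    then show ?thesis by presburger
  qed
qed

lemma lp_bound:
  assumes lp: "lifted_pp m k S f" and m: "2 \<le> m"
  shows "\<exists>K\<ge>0. \<forall>a\<in>S. \<bar>f a - a\<bar> \<le> K"
proof -
  have Tpos: "Tm m > 0" using m by (simp add: Tm_def)
  define S' where "S' = {a\<in>S. 0 \<le> a \<and> a < Tm m}"
  have fin: "finite S'" unfolding S'_def by (rule finite_subset[of _ "{0..Tm m}"]) auto
  define K where "K = Max (insert 0 ((\<lambda>a. \<bar>f a - a\<bar>) ` S'))"
  have K0: "K \<ge> 0" unfolding K_def using fin by simp
  have "\<bar>f a - a\<bar> \<le> K" if a: "a \<in> S" for a
  proof -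
    define q where "q = a div Tm m"
    define r where "r = a mod Tm m"
    have ar: "a = tr m q r" unfolding tr_def q_def r_def by simp
    have "r = tr m (-q) a" unfolding tr_def q_def r_def by (simp add: minus_div_mult_eq_mod[symmetric] algebra_simps)
    then have rS: "r \<in> S" using lpS[OF lp tr_in_Gm a] by simp
    have "r \<in> S'" unfolding S'_def using rS Tpos r_def by simp
    then have "\<bar>f r - r\<bar> \<le> K" unfolding K_def using fin by (intro Max_ge) auto
    moreover have "f a = tr m q (f r)" using ar lpf[OF lp tr_in_Gm rS] by simp
    ultimately show ?thesis using ar by (simp add: tr_def)
  qed
  then show ?thesis using K0 by blast
qed

lemma sqrel_abs: "sqrel m i j i' j' \<Longrightarrow> \<bar>i' - j'\<bar> = \<bar>i - j\<bar>"
  unfolding sqrel_def by auto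

lemma compact_bound:
  assumes "compact_supp m \<phi>"
  shows "\<exists>L. \<forall>i j. \<bar>i - j\<bar> > L \<longrightarrow> \<phi> (region m i j) = 0"
proof -
  define F where "F = {R \<in> regions m. \<phi> R \<noteq> 0}"
  have fin: "finite F" using assms unfolding compact_supp_def F_def by simp
  define rep where "rep R = (SOME p. R = region m (fst p) (snd p))" for R
  define L where "L = Max (insert 0 ((\<lambda>R. \<bar>fst (rep R) - snd (rep R)\<bar>) ` F))"
  have "\<phi> (region m i j) = 0" if ij: "\<bar>i - j\<bar> > L" for i j
  proof (rule ccontr)
    assume nz: "\<phi> (region m i j) \<noteq> 0"
    let ?R = "region m i j"
    have RF: "?R \<in> F" unfolding F_def regions_def using nz by auto
    have "\<exists>p. ?R = region m (fst p) (snd p)" by (rule exI[of _ "(i,j)"]) simp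
    then have "?R = region m (fst (rep ?R)) (snd (rep ?R))" unfolding rep_def by (rule someI_ex)
    then have "sqrel m i j (fst (rep ?R)) (snd (rep ?R))" using region_eq_iff by blast
    then have e: "\<bar>fst (rep ?R) - snd (rep ?R)\<bar> = \<bar>i - j\<bar>" by (rule sqrel_abs)
    have "\<bar>fst (rep ?R) - snd (rep ?R)\<bar> \<le> L" unfolding L_def using fin RF by (intro Max_ge) auto
    then show False using e ij by simp
  qed
  then show ?thesis by blast
qed

lemma int_const:
  fixes h :: "int \<Rightarrow> int"
  assumes "\<And>x. h x = h (x - 1)"
  shows "h x = h y"
proof -
  have "h x = h 0" for x
  proof (induction x rule: int_induct[where k=0])
    case base then show ?case by simp
  next
    case (step1 i) then show ?case using assms[of "i+1"] by simp
  next
    case (step2 i) then show ?case using assms[of i] by simp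
  qed
  then show ?thesis by metis
qed

lemma vanish:
  fixes d :: "int \<Rightarrow> int \<Rightarrow> int"
  assumes dd: "\<And>a b. d (a-1) b + d a (b-1) - d a b - d (a-1) (b-1) = 0"
    and sup: "\<And>i j. \<bar>i - j\<bar> > L \<Longrightarrow> d i j = 0"
  shows "d i j = 0"
proof -
  have e: "d a b - d (a-1) b = 0" for a b
  proof -
    have "d a b - d (a-1) b = d a b' - d (a-1) b'" for b'
      by (rule int_const[where h="\<lambda>b. d a b - d (a-1) b"]) (use dd[of a] in \<open>simp add: algebra_simps\<close>)
    moreover have "d a (a + \<bar>L\<bar> + 2) = 0" "d (a-1) (a + \<bar>L\<bar> + 2) = 0" by (rule sup, simp)+
    ultimately show ?thesis by (metis diff_self)
  qed
  have "d i j = d (j + \<bar>L\<bar> + 1) j"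
    by (rule int_const[where h="\<lambda>a. d a j"]) (use e in simp)
  also have "\<dots> = 0" by (rule sup) simp
  finally show ?thesis .
qed

lemma trS: assumes lp: "lifted_pp m k S f" and a: "a \<in> S" shows "a + t * Tm m \<in> S"
  using lpS[OF lp tr_in_Gm[of m t] a] by (simp add: tr_def)
lemma trf: assumes lp: "lifted_pp m k S f" and a: "a \<in> S" shows "f (a + t * Tm m) = f a + t * Tm m"
  using lpf[OF lp tr_in_Gm[of m t] a] by (simp add: tr_def)
lemma rfS: assumes lp: "lifted_pp m k S f" and a: "a \<in> S" shows "1 + t * Tm m - a \<in> S"
  using lpS[OF lp rf_in_Gm[of m t] a] by (simp add: rf_def)
lemma rff: assumes lp: "lifted_pp m k S f" and a: "a \<in> S" shows "f (1 + t * Tm m - a) = 1 + t * Tm m - f a"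
  using lpf[OF lp rf_in_Gm[of m t] a] by (simp add: rf_def)

lemma card_eq_bij: "\<lbrakk>\<forall>a\<in>A. h' (h a) = a; \<forall>b\<in>B. h (h' b) = b; h ` A \<subseteq> B; h' ` B \<subseteq> A\<rbrakk> \<Longrightarrow> card A = card B"
  by (rule bij_betw_same_card, rule bij_betw_byWitness)

definition NN :: "int set \<Rightarrow> (int \<Rightarrow> int) \<Rightarrow> int \<Rightarrow> int \<Rightarrow> int" where
  "NN S f i j = int (card {a\<in>S. a \<le> i \<and> f a > j})"
definition MM :: "int set \<Rightarrow> (int \<Rightarrow> int) \<Rightarrow> int \<Rightarrow> int \<Rightarrow> int" where
  "MM S f i j = int (card {a\<in>S. a > i \<and> f a \<le> j})"

lemma finN: fixes S :: "int set" and f :: "int \<Rightarrow> int" shows "\<forall>a\<in>S. \<bar>f a - a\<bar> \<le> K \<Longrightarrow> finite {a\<in>S. a \<le> i \<and> f a > j}"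
  by (rule finite_subset[of _ "{j-K..i}"]) force+
lemma finM: fixes S :: "int set" and f :: "int \<Rightarrow> int" shows "\<forall>a\<in>S. \<bar>f a - a\<bar> \<le> K \<Longrightarrow> finite {a\<in>S. a > i \<and> f a \<le> j}"
  by (rule finite_subset[of _ "{i..j+K}"]) force+

lemma card_step:
  assumes "finite A"
  shows "int (card {a\<in>A. P a}) = int (card {a\<in>A. P a \<and> a \<noteq> x}) + (if x \<in> A \<and> P x then 1 else 0)"
proof (cases "x \<in> A \<and> P x")
  case True
  then have "{a\<in>A. P a} = insert x {a\<in>A. P a \<and> a \<noteq> x}" by auto
  moreover have "finite {a\<in>A. P a \<and> a \<noteq> x}" using assms by simp
  ultimately show ?thesis using True by simp
next
  case False
  then have "{a\<in>A. P a} = {a\<in>A. P a \<and> a \<noteq> x}" by auto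
  then show ?thesis using False by simp
qed

lemma NN_stepi:
  assumes b: "\<forall>a\<in>S. \<bar>f a - a\<bar> \<le> K"
  shows "NN S f i j = NN S f (i-1) j + (if i \<in> S \<and> f i > j then 1 else 0)"
proof -
  have fin: "finite {a\<in>S. a \<le> i \<and> f a > j}" using finN[OF b] .
  have "int (card {a\<in>{a\<in>S. a \<le> i \<and> f a > j}. True}) = int (card {a\<in>{a\<in>S. a \<le> i \<and> f a > j}. True \<and> a \<noteq> i}) + (if i \<in> {a\<in>S. a \<le> i \<and> f a > j} \<and> True then 1 else 0)"
    by (rule card_step[OF fin])
  moreover have "{a\<in>{a\<in>S. a \<le> i \<and> f a > j}. True \<and> a \<noteq> i} = {a\<in>S. a \<le> i-1 \<and> f a > j}" by auto
  ultimately show ?thesis unfolding NN_def by simp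
qed

lemma MM_stepi:
  assumes b: "\<forall>a\<in>S. \<bar>f a - a\<bar> \<le> K"
  shows "MM S f (i-1) j = MM S f i j + (if i \<in> S \<and> f i \<le> j then 1 else 0)"
proof -
  have fin: "finite {a\<in>S. a > i-1 \<and> f a \<le> j}" using finM[OF b] .
  have "int (card {a\<in>{a\<in>S. a > i-1 \<and> f a \<le> j}. True}) = int (card {a\<in>{a\<in>S. a > i-1 \<and> f a \<le> j}. True \<and> a \<noteq> i}) + (if i \<in> {a\<in>S. a > i-1 \<and> f a \<le> j} \<and> True then 1 else 0)"
    by (rule card_step[OF fin])
  moreover have "{a\<in>{a\<in>S. a > i-1 \<and> f a \<le> j}. True \<and> a \<noteq> i} = {a\<in>S. a > i \<and> f a \<le> j}" by auto
  ultimately show ?thesis unfolding MM_def by simp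
qed

lemma card_fiber:
  assumes "inj_on f S"
  shows "card {a\<in>S. f a = j} = (if j \<in> f ` S then 1 else 0)"
proof (cases "j \<in> f ` S")
  case True
  then obtain a0 where a0: "a0 \<in> S" "j = f a0" by blast
  have "{a\<in>S. f a = j} = {a0}" using a0 assms unfolding inj_on_def by auto
  then show ?thesis using True by simp
next
  case False
  have e: "{a\<in>S. f a = j} = {}" using False by blast
  show ?thesis using False by (subst e) simp
qed

lemma D_stepj:
  assumes b: "\<forall>a\<in>S. \<bar>f a - a\<bar> \<le> K" and inj: "inj_on f S"
  shows "(NN S f i j - MM S f i j) - (NN S f i (j-1) - MM S f i (j-1)) = - (if j \<in> f ` S then 1 else 0)"
proof -
  have f1: "finite {a\<in>S. a \<le> i \<and> f a = j}" by (rule finite_subset[of _ "{j-K..i}"]) (use b in force)+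
  have f2: "finite {a\<in>S. a > i \<and> f a = j}" by (rule finite_subset[of _ "{i..j+K}"]) (use b in force)+
  have e1: "{a\<in>S. a \<le> i \<and> f a > j-1} = {a\<in>S. a \<le> i \<and> f a > j} \<union> {a\<in>S. a \<le> i \<and> f a = j}" by auto
  have e2: "{a\<in>S. a > i \<and> f a \<le> j} = {a\<in>S. a > i \<and> f a \<le> j-1} \<union> {a\<in>S. a > i \<and> f a = j}" by auto
  have e3: "{a\<in>S. f a = j} = {a\<in>S. a \<le> i \<and> f a = j} \<union> {a\<in>S. a > i \<and> f a = j}" by auto
  have c1: "card {a\<in>S. a \<le> i \<and> f a > j-1} = card {a\<in>S. a \<le> i \<and> f a > j} + card {a\<in>S. a \<le> i \<and> f a = j}"
    unfolding e1 by (rule card_Un_disjoint) (use finN[OF b, of i "j-1"] finN[OF b, of i j] f1 in auto)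
  have c2: "card {a\<in>S. a > i \<and> f a \<le> j} = card {a\<in>S. a > i \<and> f a \<le> j-1} + card {a\<in>S. a > i \<and> f a = j}"
    unfolding e2 by (rule card_Un_disjoint) (use finM[OF b, of i "j-1"] f2 in auto)
  have c3: "card {a\<in>S. f a = j} = card {a\<in>S. a \<le> i \<and> f a = j} + card {a\<in>S. a > i \<and> f a = j}"
    unfolding e3 by (rule card_Un_disjoint) (use f1 f2 in auto)
  show ?thesis using c1 c2 c3 card_fiber[OF inj, of j] unfolding NN_def MM_def
    by (simp split: if_splits)
qed

lemma D_zero:
  assumes lp: "lifted_pp m k S f" and b: "\<forall>a\<in>S. \<bar>f a - a\<bar> \<le> K"
  shows "NN S f 0 0 = MM S f 0 0"
proof -
  have "card {a\<in>S. a \<le> 0 \<and> f a > 0} = card {a\<in>S. a > 0 \<and> f a \<le> 0}"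
  proof (rule card_eq_bij[where h="\<lambda>a. 1 - a" and h'="\<lambda>a. 1 - a"])
    show "(\<lambda>a. 1 - a) ` {a\<in>S. a \<le> 0 \<and> f a > 0} \<subseteq> {a\<in>S. a > 0 \<and> f a \<le> 0}"
      using rfS[OF lp, of _ 0] rff[OF lp, of _ 0] by auto
    show "(\<lambda>a. 1 - a) ` {a\<in>S. a > 0 \<and> f a \<le> 0} \<subseteq> {a\<in>S. a \<le> 0 \<and> f a > 0}"
      using rfS[OF lp, of _ 0] rff[OF lp, of _ 0] by auto
  qed auto
  then show ?thesis unfolding NN_def MM_def by simp
qed

lemma NN_tr:
  assumes lp: "lifted_pp m k S f"
  shows "NN S f (i + t * Tm m) (j + t * Tm m) = NN S f i j"
proof -
  have "card {a\<in>S. a \<le> i \<and> f a > j} = card {a\<in>S. a \<le> i + t * Tm m \<and> f a > j + t * Tm m}"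
  proof (rule card_eq_bij[where h="\<lambda>a. a + t * Tm m" and h'="\<lambda>a. a - t * Tm m"])
    show "(\<lambda>a. a + t * Tm m) ` {a\<in>S. a \<le> i \<and> f a > j} \<subseteq> {a\<in>S. a \<le> i + t * Tm m \<and> f a > j + t * Tm m}"
      using trS[OF lp] trf[OF lp] by auto
    show "(\<lambda>a. a - t * Tm m) ` {a\<in>S. a \<le> i + t * Tm m \<and> f a > j + t * Tm m} \<subseteq> {a\<in>S. a \<le> i \<and> f a > j}"
      using trS[OF lp, of _ "-t"] trf[OF lp, of _ "-t"] by auto
  qed auto
  then show ?thesis unfolding NN_def by simp
qed

lemma NN_rf:
  assumes lp: "lifted_pp m k S f"
  shows "NN S f (t * Tm m - i) (t * Tm m - j) = MM S f i j"
proof -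
  have "card {a\<in>S. a > i \<and> f a \<le> j} = card {a\<in>S. a \<le> t * Tm m - i \<and> f a > t * Tm m - j}"
  proof (rule card_eq_bij[where h="\<lambda>a. 1 + t * Tm m - a" and h'="\<lambda>a. 1 + t * Tm m - a"])
    show "(\<lambda>a. 1 + t * Tm m - a) ` {a\<in>S. a > i \<and> f a \<le> j} \<subseteq> {a\<in>S. a \<le> t * Tm m - i \<and> f a > t * Tm m - j}"
      using rfS[OF lp] rff[OF lp] by auto
    show "(\<lambda>a. 1 + t * Tm m - a) ` {a\<in>S. a \<le> t * Tm m - i \<and> f a > t * Tm m - j} \<subseteq> {a\<in>S. a > i \<and> f a \<le> j}"
      using rfS[OF lp] rff[OF lp] by auto
  qed auto
  then show ?thesis unfolding NN_def MM_def by simp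
qed

lemma D_eq:
  assumes lp1: "lifted_pp m k S f" and lp2: "lifted_pp m k S g"
    and bf: "\<forall>a\<in>S. \<bar>f a - a\<bar> \<le> K" and bg: "\<forall>a\<in>S. \<bar>g a - a\<bar> \<le> K"
    and injf: "inj_on f S" and injg: "inj_on g S" and U: "f ` S = g ` S"
  shows "NN S f i j - MM S f i j = NN S g i j - MM S g i j"
proof -
  define E where "E i j = (NN S f i j - MM S f i j) - (NN S g i j - MM S g i j)" for i j
  have Ei: "E i j = E (i-1) j" for i j
    unfolding E_def using NN_stepi[OF bf, of i j] MM_stepi[OF bf, of i j] NN_stepi[OF bg, of i j] MM_stepi[OF bg, of i j]
    by (simp split: if_splits)
  have Ej: "E i j = E i (j-1)" for i j
    unfolding E_def using D_stepj[OF bf injf, of i j] D_stepj[OF bg injg, of i j] U by simp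
  have "E i j = E 0 j" by (rule int_const[where h="\<lambda>i. E i j"]) (rule Ei)
  also have "\<dots> = E 0 0" by (rule int_const[where h="\<lambda>j. E 0 j"]) (rule Ej)
  also have "\<dots> = 0" unfolding E_def using D_zero[OF lp1 bf] D_zero[OF lp2 bg] by simp
  finally show ?thesis unfolding E_def by simp
qed

definition PS :: "int set \<Rightarrow> (int \<Rightarrow> int) \<Rightarrow> (int \<Rightarrow> int) \<Rightarrow> int \<Rightarrow> int \<Rightarrow> int" where
  "PS S f g i j = NN S f i j - NN S g i j"

definition ind :: "int set \<Rightarrow> (int \<Rightarrow> int) \<Rightarrow> int \<Rightarrow> int \<Rightarrow> int" where
  "ind S f a b = (if a \<in> S \<and> b = f a then 1 else 0)"

lemma PS_corner:
  assumes bf: "\<forall>a\<in>S. \<bar>f a - a\<bar> \<le> K" and bg: "\<forall>a\<in>S. \<bar>g a - a\<bar> \<le> K"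
  shows "PS S f g (a-1) b + PS S f g a (b-1) - PS S f g a b - PS S f g (a-1) (b-1) = ind S f a b - ind S g a b"
  unfolding PS_def ind_def
  using NN_stepi[OF bf, of a b] NN_stepi[OF bf, of a "b-1"] NN_stepi[OF bg, of a b] NN_stepi[OF bg, of a "b-1"]
  by (auto split: if_splits)

lemma NN_empty:
  assumes bf: "\<forall>a\<in>S. \<bar>f a - a\<bar> \<le> K" and "j - i \<ge> K"
  shows "NN S f i j = 0"
proof -
  have "{a\<in>S. a \<le> i \<and> f a > j} = {}" using assms by force
  then show ?thesis unfolding NN_def by (metis card.empty of_nat_0)
qed

lemma MM_empty:
  assumes bf: "\<forall>a\<in>S. \<bar>f a - a\<bar> \<le> K" and "i - j \<ge> K"
  shows "MM S f i j = 0"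
proof -
  have "{a\<in>S. a > i \<and> f a \<le> j} = {}" using assms by force
  then show ?thesis unfolding MM_def by (metis card.empty of_nat_0)
qed

lemma suff:
  assumes lp1: "lifted_pp m k S f" and lp2: "lifted_pp m k S g" and U: "f ` S = g ` S" and m: "2 \<le> m"
  shows "\<exists>\<phi>. two_chain m \<phi> \<and> compact_supp m \<phi> \<and>
           (\<forall>a b. \<phi> (region m (a-1) b) + \<phi> (region m a (b-1)) - \<phi> (region m a b) - \<phi> (region m (a-1) (b-1))
                 = ind S f a b - ind S g a b)"
proof -
  obtain Kf where Kf: "Kf \<ge> 0" "\<forall>a\<in>S. \<bar>f a - a\<bar> \<le> Kf" using lp_bound[OF lp1 m] by blast
  obtain Kg where Kg: "Kg \<ge> 0" "\<forall>a\<in>S. \<bar>g a - a\<bar> \<le> Kg" using lp_bound[OF lp2 m] by blast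
  define K where "K = max Kf Kg"
  have bf: "\<forall>a\<in>S. \<bar>f a - a\<bar> \<le> K" using Kf unfolding K_def by force
  have bg: "\<forall>a\<in>S. \<bar>g a - a\<bar> \<le> K" using Kg unfolding K_def by force
  have K0: "K \<ge> 0" using Kf unfolding K_def by simp
  have injf: "inj_on f S" by (rule lp_inj[OF lp1 m])
  have injg: "inj_on g S" by (rule lp_inj[OF lp2 m])
  note Deq = D_eq[OF lp1 lp2 bf bg injf injg U]
  define \<psi> where "\<psi> = PS S f g"
  have psi_tr: "\<psi> (i + t * Tm m) (j + t * Tm m) = \<psi> i j" for i j t
    unfolding \<psi>_def PS_def using NN_tr[OF lp1] NN_tr[OF lp2] by simp
  have psi_rf: "\<psi> (t * Tm m - i) (t * Tm m - j) = \<psi> i j" for i j t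
    unfolding \<psi>_def PS_def using NN_rf[OF lp1] NN_rf[OF lp2] Deq[of i j] by simp
  have psi_rel: "sqrel m i j i' j' \<Longrightarrow> \<psi> i' j' = \<psi> i j" for i j i' j'
    unfolding sqrel_def using psi_tr psi_rf by auto
  have psi_supp: "\<psi> i j = 0" if "\<bar>i - j\<bar> \<ge> K" for i j
  proof (cases "j - i \<ge> K")
    case True
    then show ?thesis unfolding \<psi>_def PS_def using NN_empty[OF bf True] NN_empty[OF bg True] by simp
  next
    case False
    then have h: "i - j \<ge> K" using that by linarith
    show ?thesis unfolding \<psi>_def PS_def using Deq[of i j] MM_empty[OF bf h] MM_empty[OF bg h] by simp
  qed
  define rep where "rep R = (SOME p. R = region m (fst p) (snd p))" for R
  define \<phi> where "\<phi> R = (if R \<in> regions m then \<psi> (fst (rep R)) (snd (rep R)) else 0)" for R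
  have phi_reg: "\<phi> (region m i j) = \<psi> i j" for i j
  proof -
    let ?R = "region m i j"
    have "\<exists>p. ?R = region m (fst p) (snd p)" by (rule exI[of _ "(i,j)"]) simp
    then have "?R = region m (fst (rep ?R)) (snd (rep ?R))" unfolding rep_def by (rule someI_ex)
    then have "sqrel m i j (fst (rep ?R)) (snd (rep ?R))" using region_eq_iff by blast
    then have "\<psi> (fst (rep ?R)) (snd (rep ?R)) = \<psi> i j" by (rule psi_rel)
    moreover have "?R \<in> regions m" unfolding regions_def by blast
    ultimately show ?thesis unfolding \<phi>_def by simp
  qed
  have tc: "two_chain m \<phi>" unfolding two_chain_def \<phi>_def by simp
  have Tpos: "Tm m > 0" using m by (simp add: Tm_def)
  have "{R \<in> regions m. \<phi> R \<noteq> 0} \<subseteq> (\<lambda>p. region m (fst p) (snd p)) ` ({0..<Tm m} \<times> {-K..Tm m + K})"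
  proof
    fix R assume R: "R \<in> {R \<in> regions m. \<phi> R \<noteq> 0}"
    then obtain i j where ij: "R = region m i j" unfolding regions_def by blast
    then have nz: "\<psi> i j \<noteq> 0" using R phi_reg by simp
    then have d: "\<bar>i - j\<bar> < K" using psi_supp by force
    define q where "q = i div Tm m"
    define i0 where "i0 = i - q * Tm m"
    define j0 where "j0 = j - q * Tm m"
    have "i0 = i mod Tm m" unfolding i0_def q_def by (simp add: minus_div_mult_eq_mod[symmetric])
    then have i0: "0 \<le> i0" "i0 < Tm m" using Tpos by simp_all
    have "sqrel m i0 j0 i j" unfolding sqrel_def i0_def j0_def by (rule disjI1, rule exI[of _ q]) simp
    then have "R = region m i0 j0" using ij region_eq_iff by blast
    moreover have "(i0, j0) \<in> {0..<Tm m} \<times> {-K..Tm m + K}" using i0 d unfolding i0_def j0_def by auto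
    ultimately show "R \<in> (\<lambda>p. region m (fst p) (snd p)) ` ({0..<Tm m} \<times> {-K..Tm m + K})" by force
  qed
  then have cs: "compact_supp m \<phi>" unfolding compact_supp_def by (rule finite_subset) auto
  have cr: "\<phi> (region m (a-1) b) + \<phi> (region m a (b-1)) - \<phi> (region m a b) - \<phi> (region m (a-1) (b-1))
                 = ind S f a b - ind S g a b" for a b
    unfolding phi_reg \<psi>_def by (rule PS_corner[OF bf bg])
  show ?thesis using tc cs cr by blast
qed

lemma Dom_iff:
  assumes lp1: "lifted_pp m k S f" and lp2: "lifted_pp m k T g"
  shows "\<phi> \<in> Dom m (hstate m S f) (hstate m T g) \<longleftrightarrow> two_chain m \<phi> \<and>
    (\<forall>a b. \<phi> (region m (a-1) b) + \<phi> (region m a (b-1)) - \<phi> (region m a b) - \<phi> (region m (a-1) (b-1))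
                 = ind S f a b - ind T g a b)"
proof -
  have pw: "(let P = orbitP m (lattice a b) in
        (P \<in> hstate m S f - hstate m T g \<longrightarrow> initial_corner m \<phi> a b) \<and>
        (P \<in> hstate m T g - hstate m S f \<longrightarrow> terminal_corner m \<phi> a b) \<and>
        (P \<notin> hstate m S f - hstate m T g \<and> P \<notin> hstate m T g - hstate m S f \<longrightarrow> no_corner m \<phi> a b))
     \<longleftrightarrow> \<phi> (region m (a-1) b) + \<phi> (region m a (b-1)) - \<phi> (region m a b) - \<phi> (region m (a-1) (b-1))
                 = ind S f a b - ind T g a b" for a b
    unfolding Let_def Diff_iff hstate_mem[OF lp1] hstate_mem[OF lp2] initial_corner_def terminal_corner_def
      no_corner_def multA_def multB_def multC_def multD_def ind_def
    by auto
  show ?thesis unfolding Dom_def using pw by auto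
qed

lemma telescope:
  fixes r :: "int \<Rightarrow> int"
  shows "(\<Sum>k<n. r (lo + int k + 1) - r (lo + int k)) = r (lo + int n) - r lo"
  by (induction n) (auto simp: algebra_simps)

lemma pos_sum:
  fixes F :: "nat \<Rightarrow> int"
  assumes "\<forall>k<n. F k \<ge> 0" "kk < n" "F kk \<ge> 1"
  shows "(\<Sum>k<n. F k) \<ge> 1"
proof -
  have "F kk \<le> (\<Sum>k<n. F k)" by (rule member_le_sum) (use assms in auto)
  then show ?thesis using assms by simp
qed

lemma nec_core:
  fixes p :: "int \<Rightarrow> int \<Rightarrow> int"
  assumes c: "\<And>a b. p (a-1) b + p a (b-1) - p a b - p (a-1) (b-1) = ind S f a b - ind T g a b"
    and sup: "\<And>i j. \<bar>i - j\<bar> > L \<Longrightarrow> p i j = 0"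
  shows "S \<subseteq> T \<and> f ` S \<subseteq> g ` T"
proof
  show "S \<subseteq> T"
  proof
    fix a assume aS: "a \<in> S"
    show "a \<in> T"
    proof (rule ccontr)
      assume aT: "a \<notin> T"
      define r where "r b = p (a-1) b - p a b" for b
      define lo where "lo = min (f a) a - \<bar>L\<bar> - 3"
      define hi where "hi = max (f a) a + \<bar>L\<bar> + 2"
      define n where "n = nat (hi - lo)"
      have hn: "lo + int n = hi" unfolding n_def hi_def lo_def by simp
      have "(\<Sum>k<n. r (lo + int k + 1) - r (lo + int k)) = r hi - r lo" using telescope[of r lo n] hn by simp
      also have "\<dots> = 0"
      proof -
        have "p (a-1) hi = 0" "p a hi = 0" "p (a-1) lo = 0" "p a lo = 0"
          by (rule sup, simp add: hi_def lo_def)+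
        then show ?thesis unfolding r_def by simp
      qed
      finally have z: "(\<Sum>k<n. r (lo + int k + 1) - r (lo + int k)) = 0" .
      have trm: "r (lo + int k + 1) - r (lo + int k) = (if lo + int k + 1 = f a then 1 else 0)" for k
        using c[of a "lo + int k + 1"] aS aT unfolding r_def ind_def by (auto simp: algebra_simps)
      define k0 where "k0 = nat (f a - lo - 1)"
      have "(\<Sum>k<n. r (lo + int k + 1) - r (lo + int k)) = (\<Sum>k<n. (if lo + int k + 1 = f a then 1 else 0))"
        by (intro sum.cong refl trm)
      moreover have "(\<Sum>k<n. (if lo + int k + 1 = f a then 1 else 0::int)) \<ge> 1"
        by (rule pos_sum[where kk=k0]) (auto simp: k0_def n_def hi_def lo_def)
      ultimately have "(\<Sum>k<n. r (lo + int k + 1) - r (lo + int k)) \<ge> 1" by simp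
      then show False using z by simp
    qed
  qed
  show "f ` S \<subseteq> g ` T"
  proof
    fix b assume "b \<in> f ` S"
    then obtain a0 where a0: "a0 \<in> S" "b = f a0" by blast
    show "b \<in> g ` T"
    proof (rule ccontr)
      assume bT: "b \<notin> g ` T"
      define r where "r a = p a (b-1) - p a b" for a
      define lo where "lo = min a0 b - \<bar>L\<bar> - 3"
      define hi where "hi = max a0 b + \<bar>L\<bar> + 2"
      define n where "n = nat (hi - lo)"
      have hn: "lo + int n = hi" unfolding n_def hi_def lo_def by simp
      have "(\<Sum>k<n. r (lo + int k + 1) - r (lo + int k)) = r hi - r lo" using telescope[of r lo n] hn by simp
      also have "\<dots> = 0"
      proof -
        have "p hi (b-1) = 0" "p hi b = 0" "p lo (b-1) = 0" "p lo b = 0"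
          by (rule sup, simp add: hi_def lo_def)+
        then show ?thesis unfolding r_def by simp
      qed
      finally have z: "(\<Sum>k<n. r (lo + int k + 1) - r (lo + int k)) = 0" .
      have trm: "r (lo + int k + 1) - r (lo + int k) = ind S f (lo + int k + 1) b" for k
      proof -
        have "ind T g (lo + int k + 1) b = 0" using bT unfolding ind_def by auto
        then show ?thesis using c[of "lo + int k + 1" b] unfolding r_def by (auto simp: algebra_simps)
      qed
      define k0 where "k0 = nat (a0 - lo - 1)"
      have "(\<Sum>k<n. r (lo + int k + 1) - r (lo + int k)) = (\<Sum>k<n. ind S f (lo + int k + 1) b)"
        by (intro sum.cong refl trm)
      moreover have "(\<Sum>k<n. ind S f (lo + int k + 1) b) \<ge> 1"
        by (rule pos_sum[where kk=k0]) (use a0 in \<open>auto simp: k0_def n_def hi_def lo_def ind_def\<close>)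
      ultimately have "(\<Sum>k<n. r (lo + int k + 1) - r (lo + int k)) \<ge> 1" by simp
      then show False using z by simp
    qed
  qed
qed

theorem mainTheorem4:
  fixes m k :: nat and S T :: "int set" and f g :: "int \<Rightarrow> int"
  assumes "0 < k" and "k < m"
    and "lifted_pp m k S f" and "lifted_pp m k T g"
  shows "((\<exists>\<phi>. \<phi> \<in> Dom m (hstate m S f) (hstate m T g) \<and> compact_supp m \<phi>)
            \<longleftrightarrow> (S = T \<and> f ` S = g ` T))
       \<and> (\<forall>\<phi> \<psi>. \<phi> \<in> Dom m (hstate m S f) (hstate m T g) \<and> compact_supp m \<phi> \<and>
                 \<psi> \<in> Dom m (hstate m S f) (hstate m T g) \<and> compact_supp m \<psi> \<longrightarrow> \<phi> = \<psi>)"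
proof -
  have m: "2 \<le> m" using assms(1,2) by simp
  note lp1 = assms(3) and lp2 = assms(4)
  note DI = Dom_iff[OF lp1 lp2]
  have uniq: "\<phi> = \<psi>" if h: "\<phi> \<in> Dom m (hstate m S f) (hstate m T g)" "compact_supp m \<phi>"
      "\<psi> \<in> Dom m (hstate m S f) (hstate m T g)" "compact_supp m \<psi>" for \<phi> \<psi>
  proof -
    obtain L1 where L1: "\<forall>i j. \<bar>i - j\<bar> > L1 \<longrightarrow> \<phi> (region m i j) = 0" using compact_bound[OF h(2)] by blast
    obtain L2 where L2: "\<forall>i j. \<bar>i - j\<bar> > L2 \<longrightarrow> \<psi> (region m i j) = 0" using compact_bound[OF h(4)] by blast
    have c1: "two_chain m \<phi>" "\<And>a b. \<phi> (region m (a-1) b) + \<phi> (region m a (b-1)) - \<phi> (region m a b) - \<phi> (region m (a-1) (b-1))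
                 = ind S f a b - ind T g a b" using iffD1[OF DI h(1)] by blast+
    have c2: "two_chain m \<psi>" "\<And>a b. \<psi> (region m (a-1) b) + \<psi> (region m a (b-1)) - \<psi> (region m a b) - \<psi> (region m (a-1) (b-1))
                 = ind S f a b - ind T g a b" using iffD1[OF DI h(3)] by blast+
    define d where "d i j = \<phi> (region m i j) - \<psi> (region m i j)" for i j
    have d0: "d i j = 0" for i j
    proof (rule vanish[where L="max L1 L2" and d=d])
      show "d (a-1) b + d a (b-1) - d a b - d (a-1) (b-1) = 0" for a b
        using c1(2)[of a b] c2(2)[of a b] unfolding d_def by simp
      show "\<bar>i - j\<bar> > max L1 L2 \<Longrightarrow> d i j = 0" for i j using L1[rule_format, of i j] L2[rule_format, of i j] unfolding d_def by simp
    qed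
    show "\<phi> = \<psi>"
    proof
      fix R
      show "\<phi> R = \<psi> R"
      proof (cases "R \<in> regions m")
        case True
        then obtain i j where "R = region m i j" unfolding regions_def by blast
        then show ?thesis using d0[of i j] unfolding d_def by simp
      next
        case False
        then show ?thesis using c1(1) c2(1) unfolding two_chain_def by simp
      qed
    qed
  qed
  have nec: "S = T \<and> f ` S = g ` T" if h: "\<phi> \<in> Dom m (hstate m S f) (hstate m T g)" "compact_supp m \<phi>" for \<phi>
  proof -
    obtain L where L: "\<forall>i j. \<bar>i - j\<bar> > L \<longrightarrow> \<phi> (region m i j) = 0" using compact_bound[OF h(2)] by blast
    have c: "\<And>a b. \<phi> (region m (a-1) b) + \<phi> (region m a (b-1)) - \<phi> (region m a b) - \<phi> (region m (a-1) (b-1))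
                 = ind S f a b - ind T g a b" using iffD1[OF DI h(1)] by blast+
    have A: "S \<subseteq> T \<and> f ` S \<subseteq> g ` T"
      by (rule nec_core[where p="\<lambda>i j. \<phi> (region m i j)" and L=L]) (use c L in blast)+
    have B: "T \<subseteq> S \<and> g ` T \<subseteq> f ` S"
    proof (rule nec_core[where p="\<lambda>i j. - \<phi> (region m i j)" and L=L])
      show "- \<phi> (region m (a-1) b) + - \<phi> (region m a (b-1)) - - \<phi> (region m a b) - - \<phi> (region m (a-1) (b-1))
                 = ind T g a b - ind S f a b" for a b using c[of a b] by simp
      show "\<bar>i - j\<bar> > L \<Longrightarrow> - \<phi> (region m i j) = 0" for i j using L by simp
    qed
    show ?thesis using A B by blast
  qed
  have suf: "\<exists>\<phi>. \<phi> \<in> Dom m (hstate m S f) (hstate m T g) \<and> compact_supp m \<phi>" if h: "S = T" "f ` S = g ` T"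
  proof -
    have lp2': "lifted_pp m k S g" using lp2 h by simp
    obtain \<phi> where \<phi>: "two_chain m \<phi>" "compact_supp m \<phi>"
      "\<forall>a b. \<phi> (region m (a-1) b) + \<phi> (region m a (b-1)) - \<phi> (region m a b) - \<phi> (region m (a-1) (b-1))
                 = ind S f a b - ind S g a b"
      using suff[OF lp1 lp2' _ m] h by auto
    then have "\<phi> \<in> Dom m (hstate m S f) (hstate m T g)" using DI h(1) by simp
    then show ?thesis using \<phi>(2) by blast
  qed
  have P1: "(\<exists>\<phi>. \<phi> \<in> Dom m (hstate m S f) (hstate m T g) \<and> compact_supp m \<phi>)
            \<longleftrightarrow> (S = T \<and> f ` S = g ` T)"
  proof
    assume "\<exists>\<phi>. \<phi> \<in> Dom m (hstate m S f) (hstate m T g) \<and> compact_supp m \<phi>"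
    then obtain \<phi> where "\<phi> \<in> Dom m (hstate m S f) (hstate m T g)" "compact_supp m \<phi>" by blast
    then show "S = T \<and> f ` S = g ` T" by (rule nec)
  next
    assume "S = T \<and> f ` S = g ` T"
    then show "\<exists>\<phi>. \<phi> \<in> Dom m (hstate m S f) (hstate m T g) \<and> compact_supp m \<phi>" using suf by blast
  qed
  have P2: "\<forall>\<phi> \<psi>. \<phi> \<in> Dom m (hstate m S f) (hstate m T g) \<and> compact_supp m \<phi> \<and>
                 \<psi> \<in> Dom m (hstate m S f) (hstate m T g) \<and> compact_supp m \<psi> \<longrightarrow> \<phi> = \<psi>"
  proof (intro allI impI)
    fix \<phi> \<psi>
    assume "\<phi> \<in> Dom m (hstate m S f) (hstate m T g) \<and> compact_supp m \<phi> \<and>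
                 \<psi> \<in> Dom m (hstate m S f) (hstate m T g) \<and> compact_supp m \<psi>"
    then show "\<phi> = \<psi>" using uniq by blast
  qed
  show ?thesis using P1 P2 by (rule conjI)
qed

end
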